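(* Let $G=(\mathcal{X},\mathcal{E})$ be a (simple, undirected) graph on a finite vertex set and $P$ a pmf on $\mathcal{X}$. Then $I_2(G,P)\le H_2(G,P)$.
   Context: $\log$ is base 2. $I_2(G,P):=-\log\sum_{(x,x')\in\mathcal{X}^2:\,\{x,x'\}\notin\mathcal{E}}P(x)P(x')$ (pairs with $x=x'$ are included, since singletons are never edges). Let $\mathcal{Y}\subseteq2^{\mathcal{X}}$ be the set of maximal independent sets of $G$, and let $\Delta(G,P)$ be the set of pmfs $P(x,y)$ on $\mathcal{X}\times\mathcal{Y}$ whose $\mathcal{X}$-marginal is $P$ and with $\sum_{(x,y):x\in y}P(x,y)=1$; write $P(y)$ for the $\mathcal{Y}$-marginal. Define $H_2(G,P):=\min_{P(x,y)\in\Delta(G,P)}\Big(-\log\sum_{(x,y):x\in y}P(x)P(y)\Big)$. *)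

theory Defs
  imports "HOL-Analysis.Analysis"
begin

definition simple_graph :: "'a set \<Rightarrow> 'a set set \<Rightarrow> bool" where
  "simple_graph X E \<longleftrightarrow> finite X \<and> (\<forall>e\<in>E. e \<subseteq> X \<and> card e = 2)"

definition is_pmf_on :: "'a set \<Rightarrow> ('a \<Rightarrow> real) \<Rightarrow> bool" where
  "is_pmf_on X P \<longleftrightarrow> (\<forall>x\<in>X. 0 \<le> P x) \<and> (\<Sum>x\<in>X. P x) = 1"

definition independent_set :: "'a set set \<Rightarrow> 'a set \<Rightarrow> bool" where
  "independent_set E S \<longleftrightarrow> (\<forall>x\<in>S. \<forall>x'\<in>S. {x, x'} \<notin> E)"

definition max_indep_sets :: "'a set \<Rightarrow> 'a set set \<Rightarrow> 'a set set" where
  "max_indep_sets X E = {S. S \<subseteq> X \<and> independent_set E S \<and>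
      (\<forall>T. S \<subset> T \<and> T \<subseteq> X \<longrightarrow> \<not> independent_set E T)}"

definition I2 :: "'a set \<Rightarrow> 'a set set \<Rightarrow> ('a \<Rightarrow> real) \<Rightarrow> real" where
  "I2 X E P = - log 2 (\<Sum>x\<in>X. \<Sum>x'\<in>X. if {x, x'} \<notin> E then P x * P x' else 0)"

definition Delta :: "'a set \<Rightarrow> 'a set set \<Rightarrow> ('a \<Rightarrow> real) \<Rightarrow> ('a \<Rightarrow> 'a set \<Rightarrow> real) set" where
  "Delta X E P = {Q. (\<forall>x\<in>X. \<forall>y\<in>max_indep_sets X E. 0 \<le> Q x y)
      \<and> (\<Sum>x\<in>X. \<Sum>y\<in>max_indep_sets X E. Q x y) = 1
      \<and> (\<forall>x\<in>X. (\<Sum>y\<in>max_indep_sets X E. Q x y) = P x)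
      \<and> (\<Sum>x\<in>X. \<Sum>y\<in>max_indep_sets X E. if x \<in> y then Q x y else 0) = 1}"

definition Y_marginal :: "'a set \<Rightarrow> ('a \<Rightarrow> 'a set \<Rightarrow> real) \<Rightarrow> 'a set \<Rightarrow> real" where
  "Y_marginal X Q y = (\<Sum>x\<in>X. Q x y)"

text \<open>The minimum is taken as the infimum over Delta (it is attained).\<close>
definition H2 :: "'a set \<Rightarrow> 'a set set \<Rightarrow> ('a \<Rightarrow> real) \<Rightarrow> real" where
  "H2 X E P = Inf ((\<lambda>Q. - log 2 (\<Sum>x\<in>X. \<Sum>y\<in>max_indep_sets X E.
        if x \<in> y then P x * Y_marginal X Q y else 0)) ` Delta X E P)"

end

theory Submission
  imports Defs
begin

lemma exists_max_indep:
  assumes sg: "simple_graph X E" and x: "x \<in> X"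
  shows "\<exists>S\<in>max_indep_sets X E. x \<in> S"
proof -
  have fin: "finite X" using sg by (simp add: simple_graph_def)
  let ?F = "{S. S \<subseteq> X \<and> x \<in> S \<and> independent_set E S}"
  have "{x} \<in> ?F"
  proof -
    have "card {x, x} \<noteq> 2" by simp
    hence "{x, x} \<notin> E" using sg unfolding simple_graph_def by blast
    thus ?thesis using x unfolding independent_set_def by simp
  qed
  hence ne: "?F \<noteq> {}" by blast
  have "?F \<subseteq> Pow X" by blast
  hence finF: "finite ?F" using fin by (meson finite_Pow_iff finite_subset)
  from finite_has_maximal[OF finF ne] obtain S where S: "S \<in> ?F"
    and mx0: "\<forall>T \<in> ?F. S \<le> T \<longrightarrow> S = T" by (rule bexE)
  have mx: "\<And>T. T \<in> ?F \<Longrightarrow> S \<le> T \<Longrightarrow> S = T" 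
  proof -
    fix T assume "T \<in> ?F" "S \<le> T"
    from mx0 \<open>T \<in> ?F\<close> have "S \<le> T \<longrightarrow> S = T" by (rule bspec)
    thus "S = T" using \<open>S \<le> T\<close> by (rule mp)
  qed
  have SX: "S \<subseteq> X" and SI: "independent_set E S" and xS: "x \<in> S" using S by simp_all
  have "\<not> independent_set E T" if "S \<subset> T" "T \<subseteq> X" for T
  proof
    assume "independent_set E T"
    with that xS have "T \<in> ?F" by blast
    from mx[OF this] that(1) show False by blast
  qed
  hence "S \<in> max_indep_sets X E" unfolding max_indep_sets_def using SX SI by blast
  thus ?thesis using S by blast
qed

theorem proposition4:
  fixes X :: "'a set" and E :: "'a set set" and P :: "'a \<Rightarrow> real"
  assumes "simple_graph X E" and "is_pmf_on X P"
  shows "I2 X E P \<le> H2 X E P"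
proof -
  define Y where "Y = max_indep_sets X E"
  have finX: "finite X" using assms(1) by (simp add: simple_graph_def)
  have "Y \<subseteq> Pow X" unfolding Y_def max_indep_sets_def by blast
  hence finY: "finite Y" using finX by (meson finite_Pow_iff finite_subset)
  have Pnn: "\<And>x. x \<in> X \<Longrightarrow> 0 \<le> P x" and Psum: "(\<Sum>x\<in>X. P x) = 1"
    using assms(2) by (auto simp: is_pmf_on_def)
  define SI where "SI = (\<Sum>x\<in>X. \<Sum>x'\<in>X. if {x, x'} \<notin> E then P x * P x' else 0)"
  define f where "f x = (SOME S. S \<in> Y \<and> x \<in> S)" for x
  have f: "\<And>x. x \<in> X \<Longrightarrow> f x \<in> Y \<and> x \<in> f x"
    unfolding f_def Y_def by (rule someI_ex) (use exists_max_indep[OF assms(1)] in blast)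
  define Q0 where "Q0 x y = (if y = f x then P x else 0)" for x y
  have Q0row: "\<And>x. x \<in> X \<Longrightarrow> (\<Sum>y\<in>Y. Q0 x y) = P x"
    unfolding Q0_def using f finY by (simp add: sum.delta')
  have Q0in: "(\<Sum>x\<in>X. \<Sum>y\<in>Y. if x \<in> y then Q0 x y else 0) = 1"
  proof -
    have "\<And>x. x \<in> X \<Longrightarrow> (\<Sum>y\<in>Y. if x \<in> y then Q0 x y else 0) = (\<Sum>y\<in>Y. Q0 x y)"
      by (rule sum.cong) (auto simp: Q0_def dest: f)
    thus ?thesis using Q0row Psum by simp
  qed
  have "Q0 \<in> Delta X E P"
    unfolding Delta_def Y_def[symmetric] using Q0row Q0in Psum Pnn
    by (auto simp: Q0_def)
  hence neD: "Delta X E P \<noteq> {}" by blast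
  have main: "I2 X E P \<le> - log 2 (\<Sum>x\<in>X. \<Sum>y\<in>Y. if x \<in> y then P x * Y_marginal X Q y else 0)"
    if Q: "Q \<in> Delta X E P" for Q
  proof -
    have Qnn: "\<And>x y. x \<in> X \<Longrightarrow> y \<in> Y \<Longrightarrow> 0 \<le> Q x y"
      and Qtot: "(\<Sum>x\<in>X. \<Sum>y\<in>Y. Q x y) = 1"
      and Qrow: "\<And>x. x \<in> X \<Longrightarrow> (\<Sum>y\<in>Y. Q x y) = P x"
      and Qin: "(\<Sum>x\<in>X. \<Sum>y\<in>Y. if x \<in> y then Q x y else 0) = 1"
      using Q unfolding Delta_def Y_def by auto
    have "(\<Sum>x\<in>X. \<Sum>y\<in>Y. if x \<in> y then 0 else Q x y) =
          (\<Sum>x\<in>X. \<Sum>y\<in>Y. Q x y) - (\<Sum>x\<in>X. \<Sum>y\<in>Y. if x \<in> y then Q x y else 0)"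
      by (simp add: sum_subtractf[symmetric] if_distrib cong: if_cong)
    hence z: "(\<Sum>x\<in>X. \<Sum>y\<in>Y. if x \<in> y then 0 else Q x y) = 0" using Qtot Qin by simp
    have Q0: "Q x y = 0" if "x \<in> X" "y \<in> Y" "x \<notin> y" for x y
    proof -
      have nn: "\<And>x. x \<in> X \<Longrightarrow> 0 \<le> (\<Sum>y\<in>Y. if x \<in> y then 0 else Q x y)"
        using Qnn by (auto intro: sum_nonneg)
      have "(\<Sum>y\<in>Y. if x \<in> y then 0 else Q x y) = 0"
        using z nn finX that(1) by (simp add: sum_nonneg_eq_0_iff)
      moreover have nn2: "\<And>y'. y'\<in>Y \<Longrightarrow> 0 \<le> (if x \<in> y' then 0 else Q x y')"
        using Qnn that(1) by simp
      ultimately have "\<forall>y'\<in>Y. (if x \<in> y' then 0 else Q x y') = 0"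
        using sum_nonneg_eq_0_iff[OF finY nn2] by simp
      hence "(if x \<in> y then 0 else Q x y) = 0" using that(2) by blast
      thus ?thesis using that by simp
    qed
    define SQ where "SQ = (\<Sum>x\<in>X. \<Sum>y\<in>Y. if x \<in> y then P x * Y_marginal X Q y else 0)"
    have step1: "SQ = (\<Sum>x\<in>X. \<Sum>y\<in>Y. \<Sum>x'\<in>X. if x \<in> y \<and> x' \<in> y then P x * Q x' y else 0)"
      unfolding SQ_def Y_marginal_def
    proof (rule sum.cong[OF refl], rule sum.cong[OF refl])
      fix x y assume "x \<in> X" "y \<in> Y"
      have "(\<Sum>x'\<in>X. if x \<in> y \<and> x' \<in> y then P x * Q x' y else 0)
          = (\<Sum>x'\<in>X. if x \<in> y then P x * Q x' y else 0)"
        by (rule sum.cong) (auto simp: Q0 \<open>y \<in> Y\<close>)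
      thus "(if x \<in> y then P x * (\<Sum>x'\<in>X. Q x' y) else 0) =
            (\<Sum>x'\<in>X. if x \<in> y \<and> x' \<in> y then P x * Q x' y else 0)"
        by (simp add: sum_distrib_left)
    qed
    also have "\<dots> \<le> (\<Sum>x\<in>X. \<Sum>y\<in>Y. \<Sum>x'\<in>X. if {x, x'} \<notin> E \<and> x' \<in> y then P x * Q x' y else 0)"
    proof (intro sum_mono)
      fix x y x' assume "x \<in> X" "y \<in> Y" "x' \<in> X"
      have "x \<in> y \<Longrightarrow> x' \<in> y \<Longrightarrow> {x, x'} \<notin> E"
        using \<open>y \<in> Y\<close> by (auto simp: Y_def max_indep_sets_def independent_set_def)
      moreover have "0 \<le> P x * Q x' y" using Pnn Qnn \<open>x \<in> X\<close> \<open>y \<in> Y\<close> \<open>x' \<in> X\<close> by simp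
      ultimately show "(if x \<in> y \<and> x' \<in> y then P x * Q x' y else 0)
          \<le> (if {x, x'} \<notin> E \<and> x' \<in> y then P x * Q x' y else 0)" by auto
    qed
    also have "\<dots> = (\<Sum>x\<in>X. \<Sum>x'\<in>X. \<Sum>y\<in>Y. if {x, x'} \<notin> E \<and> x' \<in> y then P x * Q x' y else 0)"
      by (rule sum.cong[OF refl]) (rule sum.swap)
    also have "\<dots> \<le> SI"
      unfolding SI_def
    proof (intro sum_mono)
      fix x x' assume "x \<in> X" "x' \<in> X"
      have "(\<Sum>y\<in>Y. if x' \<in> y then Q x' y else 0) \<le> (\<Sum>y\<in>Y. Q x' y)"
        by (rule sum_mono) (use Qnn \<open>x' \<in> X\<close> in auto)
      hence le: "(\<Sum>y\<in>Y. if x' \<in> y then Q x' y else 0) \<le> P x'" using Qrow \<open>x' \<in> X\<close> by simp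
      have "(\<Sum>y\<in>Y. if {x, x'} \<notin> E \<and> x' \<in> y then P x * Q x' y else 0)
          = (if {x, x'} \<notin> E then P x * (\<Sum>y\<in>Y. if x' \<in> y then Q x' y else 0) else 0)"
        by (cases "{x, x'} \<in> E") (auto simp: sum_distrib_left intro!: sum.cong)
      also have "\<dots> \<le> (if {x, x'} \<notin> E then P x * P x' else 0)"
        using le Pnn[OF \<open>x \<in> X\<close>] by (auto intro: mult_left_mono)
      finally show "(\<Sum>y\<in>Y. if {x, x'} \<notin> E \<and> x' \<in> y then P x * Q x' y else 0)
          \<le> (if {x, x'} \<notin> E then P x * P x' else 0)" .
    qed
    finally have le: "SQ \<le> SI" .
    have sq: "(\<Sum>x\<in>X. \<Sum>y\<in>Y. if x \<in> y then Q x y * Q x y else 0) \<le> SQ"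
      unfolding SQ_def
    proof (intro sum_mono)
      fix x y assume x: "x \<in> X" and y: "y \<in> Y"
      show "(if x \<in> y then Q x y * Q x y else 0) \<le> (if x \<in> y then P x * Y_marginal X Q y else 0)"
      proof (cases "x \<in> y")
        case True
        have "Q x y \<le> (\<Sum>y\<in>Y. Q x y)"
          using member_le_sum[of y Y "Q x"] Qnn x y finY by auto
        hence a: "Q x y \<le> P x" using Qrow x by simp
        have b: "Q x y \<le> Y_marginal X Q y"
          unfolding Y_marginal_def using member_le_sum[of x X "\<lambda>x. Q x y"] Qnn x y finX by auto
        show ?thesis using True Qnn[OF x y] a b by (simp add: mult_mono)
      qed simp
    qed
    have "SQ > 0"
    proof (rule ccontr)
      assume "\<not> SQ > 0"
      hence s0: "(\<Sum>x\<in>X. \<Sum>y\<in>Y. if x \<in> y then Q x y * Q x y else 0) \<le> 0" using sq by simp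
      have nn: "\<And>x. x \<in> X \<Longrightarrow> 0 \<le> (\<Sum>y\<in>Y. if x \<in> y then Q x y * Q x y else 0)"
        by (auto intro: sum_nonneg)
      have nnX: "\<And>x. x\<in>X \<Longrightarrow> 0 \<le> (\<Sum>y\<in>Y. if x \<in> y then Q x y * Q x y else 0)"
        using nn by blast
      have "(\<Sum>x\<in>X. \<Sum>y\<in>Y. if x \<in> y then Q x y * Q x y else 0) = 0"
        using s0 sum_nonneg[of X "\<lambda>x. \<Sum>y\<in>Y. if x \<in> y then Q x y * Q x y else 0", OF nn] by linarith
      hence A: "\<forall>x\<in>X. (\<Sum>y\<in>Y. if x \<in> y then Q x y * Q x y else 0) = 0"
        using sum_nonneg_eq_0_iff[OF finX nnX] by simp
      have "\<forall>x\<in>X. \<forall>y\<in>Y. (if x \<in> y then Q x y * Q x y else 0) = 0"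
      proof (intro ballI)
        fix x y assume "x \<in> X" "y \<in> Y"
        have nnY: "\<And>y. y\<in>Y \<Longrightarrow> 0 \<le> (if x \<in> y then Q x y * Q x y else 0)" by simp
        show "(if x \<in> y then Q x y * Q x y else 0) = 0"
          using A \<open>x \<in> X\<close> \<open>y \<in> Y\<close> sum_nonneg_eq_0_iff[OF finY, of "\<lambda>y. if x \<in> y then Q x y * Q x y else 0", OF nnY] by simp
      qed
      hence "\<forall>x\<in>X. \<forall>y\<in>Y. (if x \<in> y then Q x y else 0) = 0" by (simp split: if_splits)
      hence "(\<Sum>x\<in>X. \<Sum>y\<in>Y. if x \<in> y then Q x y else 0) = 0" by simp
      thus False using Qin by simp
    qed
    hence lg: "log 2 SQ \<le> log 2 SI" using le by simp
    have "I2 X E P = - log 2 SI" unfolding I2_def SI_def by (rule refl)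
    with lg show ?thesis unfolding SQ_def by linarith
  qed
  show ?thesis
    unfolding H2_def Y_def[symmetric]
  proof (rule cInf_greatest)
    show "(\<lambda>Q. - log 2 (\<Sum>x\<in>X. \<Sum>y\<in>Y. if x \<in> y then P x * Y_marginal X Q y else 0)) ` Delta X E P \<noteq> {}"
      using neD by blast
  next
    fix r assume "r \<in> (\<lambda>Q. - log 2 (\<Sum>x\<in>X. \<Sum>y\<in>Y. if x \<in> y then P x * Y_marginal X Q y else 0)) ` Delta X E P"
    then obtain Q where "Q \<in> Delta X E P"
      and r: "r = - log 2 (\<Sum>x\<in>X. \<Sum>y\<in>Y. if x \<in> y then P x * Y_marginal X Q y else 0)" by blast
    from \<open>Q \<in> Delta X E P\<close> have "I2 X E P \<le> - log 2 (\<Sum>x\<in>X. \<Sum>y\<in>Y. if x \<in> y then P x * Y_marginal X Q y else 0)"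
      by (rule main)
    thus "I2 X E P \<le> r" unfolding r .
  qed
qed

end
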